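(* Let $n\ge2$ and $|\psi\rangle_{ABS}\in\mathbb{C}^2\otimes\mathbb{C}^2\otimes\mathbb{C}^n$ be a normalized pure state belonging to the class $\mathcal{A}$ defined below. Let $\mathcal{P}_m$ be the maximum probability of obtaining a two-qubit maximally entangled (Bell) state shared by Alice and Bob by a protocol in which Sapna first performs a generalized measurement and communicates the outcome to Alice and Bob, who then perform LOCC between themselves; equivalently $\mathcal{P}_m=\max\sum_i p_i E_2(|\psi_i\rangle)$ over all pure-state decompositions $\rho_{AB}=\mathrm{Tr}_S|\psi\rangle\langle\psi|=\sum_i p_i|\psi_i\rangle\langle\psi_i|$. Then $$\mathcal{P}_m=\min\{E_{A(BS)},E_{B(AS)}\}.$$
   Context: For a normalized two-qubit pure state $|\phi\rangle$, $E_2(|\phi\rangle)=2\lambda_{\min}(\phi)$ where $\lambda_{\min}$ is the smaller of its two Schmidt coefficients (squared Schmidt numbers summing to 1, possibly zero). Write $\rho_A=\mathrm{Tr}_{BS}|\psi\rangle\langle\psi|$ with eigenvalues $p_0\ge p_1$ and $\rho_B=\mathrm{Tr}_{AS}|\psi\rangle\langle\psi|$ with eigenvalues $q_0\ge q_1$; set $E_{A(BS)}=2p_1$ and $E_{B(AS)}=2q_1$. For orthonormal bases $\{|i\rangle_A\}$, $\{|j\rangle_B\}$, $\{|l\rangle_S\}_{l=1}^n$, let $A^l$ be the $2\times2$ matrix with entries $(A^l)_{ij}={}_A\langle i|{}_B\langle j|{}_S\langle l|\psi\rangle$. The state belongs to class $\mathcal{A}$ if either (i) $E_{A(BS)}\ge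 E_{B(AS)}$ and there exist orthonormal bases for which $A^{l\dagger}A^l=\mathrm{diag}(q_0^l,q_1^l)$ for all $l$ with $q_0^l\ge q_1^l$ for all $l$, where $\sum_l q_0^l=q_0$ and $\sum_l q_1^l=q_1$; or (i') $E_{A(BS)}\le E_{B(AS)}$ and there exist orthonormal bases for which $A^lA^{l\dagger}=\mathrm{diag}(p_0^l,p_1^l)$ for all $l$ with $p_0^l\ge p_1^l$ for all $l$, where $\sum_l p_0^l=p_0$ and $\sum_l p_1^l=p_1$. *)

theory Defs
  imports "HOL-Analysis.Analysis" "HOL-Library.Numeral_Type"
begin

text \<open>A state of ABS in C^2 (x) C^2 (x) C^n is a function
  psi :: 2 => 2 => 'n => complex (coefficients in the computational basis),
  where 'n is a finite type with CARD('n) = n. A two-qubit state is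
  phi :: 2 => 2 => complex. An orthonormal basis of C^m indexed by type 'm is
  a function e :: 'm => 'm => complex, where e k is the k-th basis vector.\<close>

definition orthonormal_basis :: "('m::finite \<Rightarrow> 'm \<Rightarrow> complex) \<Rightarrow> bool" where
  "orthonormal_basis e \<longleftrightarrow>
     (\<forall>k k'. (\<Sum>c\<in>UNIV. cnj (e k c) * e k' c) = (if k = k' then 1 else 0))"

definition normalized3 :: "(2 \<Rightarrow> 2 \<Rightarrow> 'n::finite \<Rightarrow> complex) \<Rightarrow> bool" where
  "normalized3 psi \<longleftrightarrow> (\<Sum>a\<in>UNIV. \<Sum>b\<in>UNIV. \<Sum>c\<in>UNIV. (cmod (psi a b c))\<^sup>2) = 1"

definition normalized2 :: "(2 \<Rightarrow> 2 \<Rightarrow> complex) \<Rightarrow> bool" where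
  "normalized2 phi \<longleftrightarrow> (\<Sum>a\<in>UNIV. \<Sum>b\<in>UNIV. (cmod (phi a b))\<^sup>2) = 1"

text \<open>Schmidt decomposition phi = sum_k sqrt(l k) |a_k> |b_k>, with l k the
  squared Schmidt numbers; lambda_min is the smaller one.\<close>

definition schmidt_decomp :: "(2 \<Rightarrow> 2 \<Rightarrow> complex) \<Rightarrow> (2 \<Rightarrow> real) \<Rightarrow> bool" where
  "schmidt_decomp phi l \<longleftrightarrow> (\<forall>k. l k \<ge> 0) \<and>
     (\<exists>a b :: 2 \<Rightarrow> 2 \<Rightarrow> complex. orthonormal_basis a \<and> orthonormal_basis b \<and>
        (\<forall>i j. phi i j = (\<Sum>k\<in>UNIV. complex_of_real (sqrt (l k)) * a k i * b k j)))"

definition lambda_min :: "(2 \<Rightarrow> 2 \<Rightarrow> complex) \<Rightarrow> real" where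
  "lambda_min phi = Inf {min (l 0) (l 1) | l. schmidt_decomp phi l}"

definition E2 :: "(2 \<Rightarrow> 2 \<Rightarrow> complex) \<Rightarrow> real" where
  "E2 phi = 2 * lambda_min phi"

definition rhoA :: "(2 \<Rightarrow> 2 \<Rightarrow> 'n::finite \<Rightarrow> complex) \<Rightarrow> 2 \<Rightarrow> 2 \<Rightarrow> complex" where
  "rhoA psi i i' = (\<Sum>j\<in>UNIV. \<Sum>l\<in>UNIV. psi i j l * cnj (psi i' j l))"

definition rhoB :: "(2 \<Rightarrow> 2 \<Rightarrow> 'n::finite \<Rightarrow> complex) \<Rightarrow> 2 \<Rightarrow> 2 \<Rightarrow> complex" where
  "rhoB psi j j' = (\<Sum>i\<in>UNIV. \<Sum>l\<in>UNIV. psi i j l * cnj (psi i j' l))"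

definition rhoAB :: "(2 \<Rightarrow> 2 \<Rightarrow> 'n::finite \<Rightarrow> complex) \<Rightarrow> (2 \<times> 2) \<Rightarrow> (2 \<times> 2) \<Rightarrow> complex" where
  "rhoAB psi x y = (\<Sum>l\<in>UNIV. psi (fst x) (snd x) l * cnj (psi (fst y) (snd y) l))"

definition eigvals2 :: "(2 \<Rightarrow> 2 \<Rightarrow> complex) \<Rightarrow> real set" where
  "eigvals2 M = {x. \<exists>v :: 2 \<Rightarrow> complex. v \<noteq> (\<lambda>_. 0) \<and>
                      (\<forall>i. (\<Sum>j\<in>UNIV. M i j * v j) = complex_of_real x * v i)}"

definition eig_max :: "(2 \<Rightarrow> 2 \<Rightarrow> complex) \<Rightarrow> real" where
  "eig_max M = Sup (eigvals2 M)"

definition eig_min :: "(2 \<Rightarrow> 2 \<Rightarrow> complex) \<Rightarrow> real" where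
  "eig_min M = Inf (eigvals2 M)"

definition E_A_BS :: "(2 \<Rightarrow> 2 \<Rightarrow> 'n::finite \<Rightarrow> complex) \<Rightarrow> real" where
  "E_A_BS psi = 2 * eig_min (rhoA psi)"

definition E_B_AS :: "(2 \<Rightarrow> 2 \<Rightarrow> 'n::finite \<Rightarrow> complex) \<Rightarrow> real" where
  "E_B_AS psi = 2 * eig_min (rhoB psi)"

text \<open>The matrices A^l with respect to orthonormal bases eA, eB, eS:
  (A^l)_{ij} = <i|_A <j|_B <l|_S psi.\<close>

definition Amat :: "(2 \<Rightarrow> 2 \<Rightarrow> 'n::finite \<Rightarrow> complex) \<Rightarrow> (2 \<Rightarrow> 2 \<Rightarrow> complex) \<Rightarrow>
    (2 \<Rightarrow> 2 \<Rightarrow> complex) \<Rightarrow> ('n \<Rightarrow> 'n \<Rightarrow> complex) \<Rightarrow> 'n \<Rightarrow> 2 \<Rightarrow> 2 \<Rightarrow> complex" where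
  "Amat psi eA eB eS l i j =
     (\<Sum>a\<in>UNIV. \<Sum>b\<in>UNIV. \<Sum>c\<in>UNIV. cnj (eA i a) * cnj (eB j b) * cnj (eS l c) * psi a b c)"

definition class_A :: "(2 \<Rightarrow> 2 \<Rightarrow> 'n::finite \<Rightarrow> complex) \<Rightarrow> bool" where
  "class_A psi \<longleftrightarrow>
    (E_A_BS psi \<ge> E_B_AS psi \<and>
      (\<exists>eA eB eS (q :: 2 \<Rightarrow> 'n \<Rightarrow> real).
         orthonormal_basis eA \<and> orthonormal_basis eB \<and> orthonormal_basis eS \<and>
         (\<forall>l j j'. (\<Sum>i\<in>UNIV. cnj (Amat psi eA eB eS l i j) * Amat psi eA eB eS l i j')
                    = (if j = j' then complex_of_real (q j l) else 0)) \<and>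
         (\<forall>l. q 0 l \<ge> q 1 l) \<and>
         (\<Sum>l\<in>UNIV. q 0 l) = eig_max (rhoB psi) \<and>
         (\<Sum>l\<in>UNIV. q 1 l) = eig_min (rhoB psi)))
    \<or>
    (E_A_BS psi \<le> E_B_AS psi \<and>
      (\<exists>eA eB eS (p :: 2 \<Rightarrow> 'n \<Rightarrow> real).
         orthonormal_basis eA \<and> orthonormal_basis eB \<and> orthonormal_basis eS \<and>
         (\<forall>l i i'. (\<Sum>j\<in>UNIV. Amat psi eA eB eS l i j * cnj (Amat psi eA eB eS l i' j))
                    = (if i = i' then complex_of_real (p i l) else 0)) \<and>
         (\<forall>l. p 0 l \<ge> p 1 l) \<and>
         (\<Sum>l\<in>UNIV. p 0 l) = eig_max (rhoA psi) \<and>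
         (\<Sum>l\<in>UNIV. p 1 l) = eig_min (rhoA psi)))"

definition pure_decomp :: "(2 \<Rightarrow> 2 \<Rightarrow> 'n::finite \<Rightarrow> complex) \<Rightarrow> nat \<Rightarrow> (nat \<Rightarrow> real) \<Rightarrow>
    (nat \<Rightarrow> 2 \<Rightarrow> 2 \<Rightarrow> complex) \<Rightarrow> bool" where
  "pure_decomp psi K p phi \<longleftrightarrow>
     (\<forall>k<K. p k \<ge> 0 \<and> normalized2 (phi k)) \<and> (\<Sum>k<K. p k) = 1 \<and>
     (\<forall>x y. rhoAB psi x y =
        (\<Sum>k<K. complex_of_real (p k) * phi k (fst x) (snd x) * cnj (phi k (fst y) (snd y))))"

definition decomp_values :: "(2 \<Rightarrow> 2 \<Rightarrow> 'n::finite \<Rightarrow> complex) \<Rightarrow> real set" where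
  "decomp_values psi = {(\<Sum>k<K. p k * E2 (phi k)) | K p phi. pure_decomp psi K p phi}"

text \<open>P_m is the maximum of decomp_values.\<close>

end

theory Submission
  imports Defs
begin

lemma t0: "(2::2) = 0" by simp
lemma t1: "(0::2) \<noteq> 1" by simp
lemma two_cases: "(i::2) = 0 \<or> i = 1" using exhaust_2[of i] t0 by metis
lemma UNIV2': "(UNIV::2 set) = {0,1}" using two_cases by auto
lemma sum2: "sum f (UNIV::2 set) = f 0 + f 1"
  unfolding UNIV2' by simp
lemma all2: "(\<forall>i::2. P i) \<longleftrightarrow> P 0 \<and> P 1"
  by (metis two_cases)
lemma onb_complete:
  fixes e :: "'m::finite \<Rightarrow> 'm \<Rightarrow> complex"
  assumes "orthonormal_basis e"
  shows "(\<Sum>k\<in>UNIV. cnj (e k c) * e k c') = (if c = c' then 1 else 0)"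
proof -
  define P :: "complex^'m^'m" where "P = (\<chi> k c. cnj (e k c))"
  define Q :: "complex^'m^'m" where "Q = (\<chi> c k. e k c)"
  have "P ** Q = mat 1"
    using assms unfolding orthonormal_basis_def
    by (simp add: P_def Q_def matrix_matrix_mult_def mat_def vec_eq_iff)
  hence "Q ** P = mat 1" using matrix_left_right_inverse by blast
  hence "(Q ** P) $ c' $ c = mat 1 $ c' $ c" by simp
  hence "(\<Sum>k\<in>UNIV. e k c' * cnj (e k c)) = (if c = c' then 1 else 0)"
    by (simp add: P_def Q_def matrix_matrix_mult_def mat_def)
  thus ?thesis by (simp add: mult.commute)
qed


definition nrm2 :: "(2 \<Rightarrow> complex) \<Rightarrow> real" where
  "nrm2 v = (\<Sum>i\<in>UNIV. (cmod (v i))\<^sup>2)"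
definition quad :: "(2 \<Rightarrow> 2 \<Rightarrow> complex) \<Rightarrow> (2 \<Rightarrow> complex) \<Rightarrow> real" where
  "quad M v = Re (\<Sum>i\<in>UNIV. \<Sum>j\<in>UNIV. cnj (v i) * M i j * v j)"
definition trM :: "(2 \<Rightarrow> 2 \<Rightarrow> complex) \<Rightarrow> real" where
  "trM M = Re (M 0 0 + M 1 1)"
definition dtM :: "(2 \<Rightarrow> 2 \<Rightarrow> complex) \<Rightarrow> real" where
  "dtM M = Re (M 0 0 * M 1 1 - M 0 1 * M 1 0)"
definition lmin :: "(2 \<Rightarrow> 2 \<Rightarrow> complex) \<Rightarrow> real" where
  "lmin M = (trM M - sqrt ((trM M)\<^sup>2 - 4 * dtM M)) / 2"
definition herm :: "(2 \<Rightarrow> 2 \<Rightarrow> complex) \<Rightarrow> bool" where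
  "herm M \<longleftrightarrow> (\<forall>i j. M j i = cnj (M i j))"

lemma vec_nz: "(v::2\<Rightarrow>complex) 0 \<noteq> 0 \<or> v 1 \<noteq> 0 \<Longrightarrow> v \<noteq> (\<lambda>_. 0)"
  by auto

lemma eigvec:
  fixes M :: "2 \<Rightarrow> 2 \<Rightarrow> complex"
  assumes "(M 0 0 - \<mu>) * (M 1 1 - \<mu>) - M 0 1 * M 1 0 = 0"
  shows "\<exists>v. v \<noteq> (\<lambda>_. 0) \<and> (\<forall>i. (\<Sum>j\<in>UNIV. M i j * v j) = \<mu> * v i)"
proof (cases "M 0 1 \<noteq> 0 \<or> M 0 0 \<noteq> \<mu>")
  case True
  define v :: "2 \<Rightarrow> complex" where "v = (\<lambda>i. if i = 0 then M 0 1 else \<mu> - M 0 0)"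
  have P: "v \<noteq> (\<lambda>_. 0)" apply (rule vec_nz) using True unfolding v_def by auto
  have e: "M 1 0 * M 0 1 + M 1 1 * (\<mu> - M 0 0) = \<mu> * (\<mu> - M 0 0)"
  proof -
    have "M 1 0 * M 0 1 + M 1 1 * (\<mu> - M 0 0) - \<mu> * (\<mu> - M 0 0) = - ((M 0 0 - \<mu>) * (M 1 1 - \<mu>) - M 0 1 * M 1 0)"
      by (simp add: algebra_simps)
    thus ?thesis using assms by simp
  qed
  have Q: "\<forall>i. (\<Sum>j\<in>UNIV. M i j * v j) = \<mu> * v i"
  proof -
    have r0: "M 0 0 * M 0 1 + M 0 1 * (\<mu> - M 0 0) = \<mu> * M 0 1" by (simp add: algebra_simps)
    show ?thesis unfolding all2 sum2 v_def using r0 e by simp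
  qed
  show ?thesis apply (rule exI[where x=v]) using P Q by (rule conjI)
next
  case False
  show ?thesis
  proof (cases "M 1 0 \<noteq> 0 \<or> M 1 1 \<noteq> \<mu>")
    case True
    define v :: "2 \<Rightarrow> complex" where "v = (\<lambda>i. if i = 0 then \<mu> - M 1 1 else M 1 0)"
    have P: "v \<noteq> (\<lambda>_. 0)" apply (rule vec_nz) using True unfolding v_def by auto
    have Q: "\<forall>i. (\<Sum>j\<in>UNIV. M i j * v j) = \<mu> * v i"
    proof -
      have a: "M 0 1 = 0" "M 0 0 = \<mu>" using False by auto
      have r1: "M 1 0 * (\<mu> - M 1 1) + M 1 1 * M 1 0 = \<mu> * M 1 0" by (simp add: algebra_simps)
      show ?thesis unfolding all2 sum2 v_def using r1 a by simp
    qed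
    show ?thesis apply (rule exI[where x=v]) using P Q by (rule conjI)
  next
    case False2: False
    define v :: "2 \<Rightarrow> complex" where "v = (\<lambda>i. if i = 0 then 1 else 0)"
    have P: "v \<noteq> (\<lambda>_. 0)" apply (rule vec_nz) unfolding v_def by simp
    have Q: "\<forall>i. (\<Sum>j\<in>UNIV. M i j * v j) = \<mu> * v i"
      unfolding all2 sum2 v_def using False False2 by simp
    show ?thesis apply (rule exI[where x=v]) using P Q by (rule conjI)
  qed
qed


lemma nrm2_pos: "v \<noteq> (\<lambda>_. 0) \<Longrightarrow> nrm2 v > 0"
proof -
  assume "v \<noteq> (\<lambda>_. 0)"
  then obtain i where "v i \<noteq> 0" by auto
  hence "(cmod (v i))\<^sup>2 > 0" by simp
  moreover have "(cmod (v i))\<^sup>2 \<le> nrm2 v" unfolding nrm2_def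
    by (rule member_le_sum) auto
  ultimately show ?thesis by linarith
qed

lemma normalize_eig:
  assumes "v \<noteq> (\<lambda>_. 0)" "\<forall>i. (\<Sum>j\<in>UNIV. M i j * v j) = x * v i"
  shows "\<exists>u. nrm2 u = 1 \<and> (\<forall>i. (\<Sum>j\<in>UNIV. M i j * u j) = x * u i)"
proof -
  define c where "c = sqrt (nrm2 v)"
  have npos: "nrm2 v > 0" using nrm2_pos assms(1) by blast
  hence cpos: "c > 0" by (simp add: c_def)
  define u where "u = (\<lambda>i. complex_of_real (1/c) * v i)"
  have "nrm2 u = nrm2 v / c\<^sup>2"
    unfolding nrm2_def u_def by (simp add: norm_divide power_divide sum_divide_distrib)
  also have "\<dots> = 1" using npos by (simp add: c_def)
  finally have n1: "nrm2 u = 1" .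
  have E: "\<forall>i. (\<Sum>j\<in>UNIV. M i j * u j) = x * u i"
  proof
    fix i
    have "(\<Sum>j\<in>UNIV. M i j * u j) = complex_of_real (1/c) * (\<Sum>j\<in>UNIV. M i j * v j)"
      unfolding u_def by (simp add: sum_distrib_left algebra_simps)
    also have "\<dots> = x * u i" using assms(2) unfolding u_def by simp
    finally show "(\<Sum>j\<in>UNIV. M i j * u j) = x * u i" .
  qed
  show ?thesis apply (rule exI[where x=u]) using n1 E by (rule conjI)
qed

lemma herm_parts:
  assumes "herm M"
  shows "M 0 0 = complex_of_real (Re (M 0 0))" "M 1 1 = complex_of_real (Re (M 1 1))"
        "M 1 0 = cnj (M 0 1)"
proof -
  have h: "\<And>i j. M j i = cnj (M i j)" using assms unfolding herm_def by blast
  have "M 0 0 = cnj (M 0 0)" "M 1 1 = cnj (M 1 1)" "M 1 0 = cnj (M 0 1)"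
    using h[of 0 0] h[of 1 1] h[of 0 1] by auto
  thus "M 0 0 = complex_of_real (Re (M 0 0))" "M 1 1 = complex_of_real (Re (M 1 1))"
        "M 1 0 = cnj (M 0 1)"
    by (auto simp: complex_eq_iff)
qed

lemma herm_lmin_facts:
  assumes H: "herm M"
  defines "\<mu> \<equiv> lmin M"
  shows "Re (M 0 0) - \<mu> \<ge> 0" "Re (M 1 1) - \<mu> \<ge> 0"
    "(Re (M 0 0) - \<mu>) * (Re (M 1 1) - \<mu>) = (cmod (M 0 1))\<^sup>2"
proof -
  define p where "p = Re (M 0 0)"
  define r where "r = Re (M 1 1)"
  define w where "w = M 0 1"
  have tr: "trM M = p + r" unfolding trM_def p_def r_def by simp
  have "Re (M 0 1 * M 1 0) = (cmod w)\<^sup>2"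
  proof -
    have "M 0 1 * M 1 0 = complex_of_real ((cmod w)\<^sup>2)"
      using herm_parts(3)[OF H] unfolding w_def by (simp only: complex_norm_square)
    thus ?thesis by simp
  qed
  moreover have "Re (M 0 0 * M 1 1) = p * r"
    using herm_parts(1,2)[OF H] unfolding p_def r_def by (metis Re_complex_of_real of_real_mult)
  ultimately have dt: "dtM M = p * r - (cmod w)\<^sup>2" unfolding dtM_def by simp
  define D where "D = (p + r)\<^sup>2 - 4 * (p * r - (cmod w)\<^sup>2)"
  have D: "D = (p - r)\<^sup>2 + 4 * (cmod w)\<^sup>2" unfolding D_def by (simp add: power2_eq_square algebra_simps)
  hence D0: "D \<ge> 0" by simp
  have mu: "\<mu> = (p + r - sqrt D) / 2" unfolding \<mu>_def lmin_def tr dt D_def by simp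
  have sq: "(sqrt D)\<^sup>2 = D" using D0 by simp
  have "sqrt D \<ge> sqrt ((p - r)\<^sup>2)" using D by (intro real_sqrt_le_mono) simp
  hence "sqrt D \<ge> \<bar>p - r\<bar>" by simp
  hence ge: "p - r \<le> sqrt D" "r - p \<le> sqrt D" by linarith+
  have mu2: "2 * \<mu> = p + r - sqrt D" using mu by simp
  show "Re (M 0 0) - \<mu> \<ge> 0" using ge mu2 unfolding p_def[symmetric] by linarith
  show "Re (M 1 1) - \<mu> \<ge> 0" using ge mu2 unfolding r_def[symmetric] by linarith
  have "(p - \<mu>) * (r - \<mu>) = (cmod w)\<^sup>2"
  proof -
    have "(p - \<mu>) * (r - \<mu>) = ((p - r)\<^sup>2 - (sqrt D)\<^sup>2) / 4 * (-1) " unfolding mu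
      by (simp add: power2_eq_square algebra_simps divide_simps)
    also have "\<dots> = (cmod w)\<^sup>2" unfolding sq D by simp
    finally show ?thesis .
  qed
  thus "(Re (M 0 0) - \<mu>) * (Re (M 1 1) - \<mu>) = (cmod (M 0 1))\<^sup>2" unfolding p_def r_def w_def .
qed


lemma quad_expand:
  assumes H: "herm M"
  shows "quad M v = Re (M 0 0) * (cmod (v 0))\<^sup>2 + Re (M 1 1) * (cmod (v 1))\<^sup>2
                    + 2 * Re (M 0 1 * cnj (v 0) * v 1)"
proof -
  have e: "M 0 0 = complex_of_real (Re (M 0 0))" "M 1 1 = complex_of_real (Re (M 1 1))"
        "M 1 0 = cnj (M 0 1)" using herm_parts[OF H] by auto
  show ?thesis unfolding quad_def sum2
    apply (subst e(1), subst e(2), subst e(3))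
    apply (simp only: cmod_power2)
    by (simp add: algebra_simps power2_eq_square)
qed

lemma quad_eig:
  assumes "nrm2 v = 1" "\<forall>i. (\<Sum>j\<in>UNIV. M i j * v j) = complex_of_real x * v i"
  shows "quad M v = x"
proof -
  have "(\<Sum>i\<in>UNIV. \<Sum>j\<in>UNIV. cnj (v i) * M i j * v j) = (\<Sum>i\<in>UNIV. cnj (v i) * (\<Sum>j\<in>UNIV. M i j * v j))"
    by (simp add: sum_distrib_left mult.assoc)
  also have "\<dots> = (\<Sum>i\<in>UNIV. complex_of_real x * (cnj (v i) * v i))"
    using assms(2) by (simp add: algebra_simps)
  also have "\<dots> = (\<Sum>i\<in>UNIV. complex_of_real (x * (cmod (v i))\<^sup>2))"
    by (simp only: of_real_mult complex_norm_square mult.commute)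
  also have "\<dots> = complex_of_real (x * nrm2 v)"
    unfolding nrm2_def by (simp add: sum_distrib_left)
  finally show ?thesis unfolding quad_def using assms(1) by simp
qed

lemma rayleigh:
  assumes H: "herm M" and n: "nrm2 v = 1"
  shows "lmin M \<le> quad M v"
proof -
  define \<mu> where "\<mu> = lmin M"
  define a where "a = Re (M 0 0) - \<mu>"
  define b where "b = Re (M 1 1) - \<mu>"
  have a0: "a \<ge> 0" and b0: "b \<ge> 0" and ab: "a * b = (cmod (M 0 1))\<^sup>2"
    using herm_lmin_facts[OF H] unfolding a_def b_def \<mu>_def by auto
  define x where "x = cmod (v 0)"
  define y where "y = cmod (v 1)"
  have nn: "x\<^sup>2 + y\<^sup>2 = 1" using n unfolding nrm2_def sum2 x_def y_def .
  have q: "quad M v = \<mu> + a * x\<^sup>2 + b * y\<^sup>2 + 2 * Re (M 0 1 * cnj (v 0) * v 1)"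
  proof -
    have "quad M v = (a + \<mu>) * x\<^sup>2 + (b + \<mu>) * y\<^sup>2 + 2 * Re (M 0 1 * cnj (v 0) * v 1)"
      unfolding quad_expand[OF H] a_def b_def x_def y_def by simp
    also have "\<dots> = \<mu> * (x\<^sup>2 + y\<^sup>2) + a * x\<^sup>2 + b * y\<^sup>2 + 2 * Re (M 0 1 * cnj (v 0) * v 1)"
      by (simp add: algebra_simps)
    finally show ?thesis using nn by simp
  qed
  have w: "cmod (M 0 1) = sqrt a * sqrt b"
    using ab a0 b0 by (metis norm_ge_zero real_sqrt_abs real_sqrt_mult abs_of_nonneg)
  have "Re (M 0 1 * cnj (v 0) * v 1) \<ge> - cmod (M 0 1 * cnj (v 0) * v 1)"
    using abs_Re_le_cmod[of "M 0 1 * cnj (v 0) * v 1"] by linarith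
  also have "cmod (M 0 1 * cnj (v 0) * v 1) = sqrt a * sqrt b * x * y"
    unfolding x_def y_def by (simp add: norm_mult w)
  finally have re: "Re (M 0 1 * cnj (v 0) * v 1) \<ge> - (sqrt a * sqrt b * x * y)" .
  have "a * x\<^sup>2 + b * y\<^sup>2 - 2 * (sqrt a * sqrt b * x * y) = (sqrt a * x - sqrt b * y)\<^sup>2"
    using a0 b0 by (simp add: power2_eq_square algebra_simps)
  hence "a * x\<^sup>2 + b * y\<^sup>2 - 2 * (sqrt a * sqrt b * x * y) \<ge> 0" by simp
  with q re show ?thesis unfolding \<mu>_def by linarith
qed

lemma herm_eigvec:
  assumes H: "herm M"
  shows "\<exists>v. nrm2 v = 1 \<and> (\<forall>i. (\<Sum>j\<in>UNIV. M i j * v j) = complex_of_real (lmin M) * v i)"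
proof -
  define \<mu> where "\<mu> = lmin M"
  have f: "(Re (M 0 0) - \<mu>) * (Re (M 1 1) - \<mu>) = (cmod (M 0 1))\<^sup>2"
    using herm_lmin_facts[OF H] unfolding \<mu>_def by auto
  have e: "M 0 0 = complex_of_real (Re (M 0 0))" "M 1 1 = complex_of_real (Re (M 1 1))"
        "M 1 0 = cnj (M 0 1)" using herm_parts[OF H] by auto
  have "(M 0 0 - complex_of_real \<mu>) * (M 1 1 - complex_of_real \<mu>) - M 0 1 * M 1 0
      = complex_of_real ((Re (M 0 0) - \<mu>) * (Re (M 1 1) - \<mu>) - (cmod (M 0 1))\<^sup>2)"
    apply (subst e(1), subst e(2), subst e(3))
    by (simp only: of_real_diff of_real_mult complex_norm_square)
  hence "(M 0 0 - complex_of_real \<mu>) * (M 1 1 - complex_of_real \<mu>) - M 0 1 * M 1 0 = 0"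
    using f by simp
  then obtain v where "v \<noteq> (\<lambda>_. 0)" "\<forall>i. (\<Sum>j\<in>UNIV. M i j * v j) = complex_of_real \<mu> * v i"
    using eigvec by blast
  from normalize_eig[OF this] show ?thesis unfolding \<mu>_def .
qed

lemma eig_min_herm:
  assumes H: "herm M"
  shows "eig_min M = lmin M"
proof -
  obtain v where v: "nrm2 v = 1" "\<forall>i. (\<Sum>j\<in>UNIV. M i j * v j) = complex_of_real (lmin M) * v i"
    using herm_eigvec[OF H] by blast
  have "v \<noteq> (\<lambda>_. 0)" using v(1) unfolding nrm2_def by auto
  hence mem: "lmin M \<in> eigvals2 M" unfolding eigvals2_def using v(2) by blast
  have low: "lmin M \<le> x" if xin: "x \<in> eigvals2 M" for x
  proof -
    obtain u where u: "u \<noteq> (\<lambda>_. 0)" "\<forall>i. (\<Sum>j\<in>UNIV. M i j * u j) = complex_of_real x * u i"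
      using xin unfolding eigvals2_def by blast
    obtain w where w: "nrm2 w = 1" "\<forall>i. (\<Sum>j\<in>UNIV. M i j * w j) = complex_of_real x * w i"
      using normalize_eig[OF u] by blast
    have "quad M w = x" using quad_eig[OF w] .
    with rayleigh[OF H w(1)] show ?thesis by simp
  qed
  show ?thesis unfolding eig_min_def by (rule cInf_eq_minimum[OF mem low])
qed


definition sA :: "(2 \<Rightarrow> 2 \<Rightarrow> complex) \<Rightarrow> real" where
  "sA phi = (\<Sum>i\<in>UNIV. \<Sum>j\<in>UNIV. (cmod (phi i j))\<^sup>2)"
definition dphi :: "(2 \<Rightarrow> 2 \<Rightarrow> complex) \<Rightarrow> complex" where
  "dphi phi = phi 0 0 * phi 1 1 - phi 0 1 * phi 1 0"

lemma sq_sum_schmidt: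
  fixes phi a b :: "2 \<Rightarrow> 2 \<Rightarrow> complex" and c :: "2 \<Rightarrow> complex"
  assumes "\<forall>i j. phi i j = (\<Sum>k\<in>UNIV. c k * a k i * b k j)"
  shows "(\<Sum>i\<in>UNIV. \<Sum>j\<in>UNIV. phi i j * cnj (phi i j)) =
    (\<Sum>k\<in>UNIV. \<Sum>k'\<in>UNIV. c k * cnj (c k') * (\<Sum>i\<in>UNIV. a k i * cnj (a k' i)) * (\<Sum>j\<in>UNIV. b k j * cnj (b k' j)))"
proof -
  have p: "phi i j = c 0 * a 0 i * b 0 j + c 1 * a 1 i * b 1 j" for i j
    using assms sum2 by metis
  show ?thesis unfolding sum2 p by (simp add: algebra_simps)
qed

lemma det_schmidt:
  fixes phi a b :: "2 \<Rightarrow> 2 \<Rightarrow> complex" and c :: "2 \<Rightarrow> complex"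
  assumes "\<forall>i j. phi i j = (\<Sum>k\<in>UNIV. c k * a k i * b k j)"
  shows "dphi phi = c 0 * c 1 * dphi a * dphi b"
proof -
  have p: "phi i j = c 0 * a 0 i * b 0 j + c 1 * a 1 i * b 1 j" for i j
    using assms sum2 by metis
  show ?thesis unfolding dphi_def p by (simp add: algebra_simps)
qed

lemma det_gram:
  fixes a :: "2 \<Rightarrow> 2 \<Rightarrow> complex" shows
  "(\<Sum>c\<in>UNIV. a 0 c * cnj (a 0 c)) * (\<Sum>c\<in>UNIV. a 1 c * cnj (a 1 c))
   - (\<Sum>c\<in>UNIV. a 0 c * cnj (a 1 c)) * (\<Sum>c\<in>UNIV. a 1 c * cnj (a 0 c))
   = dphi a * cnj (dphi a)"
  unfolding sum2 dphi_def by (simp add: algebra_simps)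

lemma onb_conj:
  assumes "orthonormal_basis e"
  shows "(\<Sum>c\<in>UNIV. e k c * cnj (e k' c)) = (if k = k' then 1 else 0)"
proof -
  have "(\<Sum>c\<in>UNIV. cnj (e k c) * e k' c) = (if k = k' then 1 else 0)"
    using assms unfolding orthonormal_basis_def by blast
  hence "cnj (\<Sum>c\<in>UNIV. cnj (e k c) * e k' c) = (if k = k' then 1 else 0)" by simp
  thus ?thesis by (simp add: mult.commute)
qed

lemma onb_det: 
  assumes "orthonormal_basis (e :: 2 \<Rightarrow> 2 \<Rightarrow> complex)"
  shows "cmod (dphi e) = 1"
proof -
  have "dphi e * cnj (dphi e) = 1"
    using det_gram[of e] onb_conj[OF assms] by simp
  hence "complex_of_real ((cmod (dphi e))\<^sup>2) = 1" by (simp only: complex_norm_square)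
  hence "(cmod (dphi e))\<^sup>2 = 1" by (metis of_real_eq_1_iff)
  thus ?thesis using norm_ge_zero[of "dphi e"] by (simp add: power2_eq_1_iff)
qed

lemma schmidt_inv:
  assumes "schmidt_decomp phi l"
  shows "l 0 + l 1 = sA phi" "l 0 * l 1 = (cmod (dphi phi))\<^sup>2"
proof -
  obtain a b where ab: "orthonormal_basis a" "orthonormal_basis b"
    "\<forall>i j. phi i j = (\<Sum>k\<in>UNIV. complex_of_real (sqrt (l k)) * a k i * b k j)"
    and l0: "\<forall>k. l k \<ge> 0"
    using assms unfolding schmidt_decomp_def by blast
  define c where "c = (\<lambda>k. complex_of_real (sqrt (l k)))"
  have rep: "\<forall>i j. phi i j = (\<Sum>k\<in>UNIV. c k * a k i * b k j)" using ab(3) unfolding c_def .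
  have cc: "c k * cnj (c k') = complex_of_real (sqrt (l k) * sqrt (l k'))" for k k'
    unfolding c_def by simp
  have "(\<Sum>i\<in>UNIV. \<Sum>j\<in>UNIV. phi i j * cnj (phi i j)) = 
     (\<Sum>k\<in>UNIV. \<Sum>k'\<in>UNIV. c k * cnj (c k') * (if k = k' then 1 else 0) * (if k = k' then 1 else 0))"
    unfolding sq_sum_schmidt[OF rep] onb_conj[OF ab(1)] onb_conj[OF ab(2)] ..
  also have "\<dots> = complex_of_real (l 0 + l 1)"
    unfolding sum2 cc using l0 by simp
  finally have X: "(\<Sum>i\<in>UNIV. \<Sum>j\<in>UNIV. phi i j * cnj (phi i j)) = complex_of_real (l 0 + l 1)" .
  have "complex_of_real (sA phi) = (\<Sum>i\<in>UNIV. \<Sum>j\<in>UNIV. phi i j * cnj (phi i j))"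
    unfolding sA_def by (simp only: of_real_sum complex_norm_square)
  hence "complex_of_real (sA phi) = complex_of_real (l 0 + l 1)" using X by simp
  thus "l 0 + l 1 = sA phi" by (metis of_real_add of_real_eq_iff)
  have "dphi phi = c 0 * c 1 * dphi a * dphi b" by (rule det_schmidt[OF rep])
  hence "cmod (dphi phi) = sqrt (l 0) * sqrt (l 1)"
    using onb_det[OF ab(1)] onb_det[OF ab(2)] l0 unfolding c_def by (simp add: norm_mult)
  thus "l 0 * l 1 = (cmod (dphi phi))\<^sup>2" using l0 by (simp add: power_mult_distrib)
qed

lemma schmidt_min:
  assumes "schmidt_decomp phi l"
  shows "min (l 0) (l 1) = (sA phi - sqrt ((sA phi)\<^sup>2 - 4 * (cmod (dphi phi))\<^sup>2)) / 2"
proof -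
  have "(sA phi)\<^sup>2 - 4 * (cmod (dphi phi))\<^sup>2 = (l 0 - l 1)\<^sup>2"
    unfolding schmidt_inv[OF assms, symmetric] by (simp add: power2_eq_square algebra_simps)
  hence "sqrt ((sA phi)\<^sup>2 - 4 * (cmod (dphi phi))\<^sup>2) = \<bar>l 0 - l 1\<bar>" by simp
  thus ?thesis unfolding schmidt_inv(1)[OF assms, symmetric] by (simp add: min_def)
qed


definition perp :: "(2 \<Rightarrow> complex) \<Rightarrow> 2 \<Rightarrow> complex" where
  "perp x = (\<lambda>i. if i = 0 then - cnj (x 1) else cnj (x 0))"
definition ip :: "(2 \<Rightarrow> complex) \<Rightarrow> (2 \<Rightarrow> complex) \<Rightarrow> complex" where
  "ip u v = (\<Sum>c\<in>UNIV. cnj (u c) * v c)"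
definition nz :: "(2 \<Rightarrow> complex) \<Rightarrow> 2 \<Rightarrow> complex" where
  "nz x = (\<lambda>i. x i / complex_of_real (sqrt (nrm2 x)))"

lemma nrm2_nonneg[simp]: "nrm2 v \<ge> 0"
  unfolding nrm2_def by (simp add: sum_nonneg)

lemma ip_self: "ip x x = complex_of_real (nrm2 x)"
  unfolding ip_def nrm2_def
  apply (simp only: of_real_sum complex_norm_square)
  by (simp add: mult.commute)

lemma ip_swap: "ip v u = cnj (ip u v)"
  unfolding ip_def by (simp add: mult.commute)

lemma onb2:
  fixes e :: "2 \<Rightarrow> 2 \<Rightarrow> complex"
  assumes "nrm2 (e 0) = 1" "nrm2 (e 1) = 1" "ip (e 0) (e 1) = 0"
  shows "orthonormal_basis e"
proof -
  have "ip (e k) (e k') = (if k = k' then 1 else 0)" for k k'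
  proof -
    have "ip (e 1) (e 0) = 0" using assms(3) ip_swap by (metis complex_cnj_zero)
    thus ?thesis using assms ip_self two_cases[of k] two_cases[of k'] by auto
  qed
  thus ?thesis unfolding orthonormal_basis_def ip_def by blast
qed

lemma perp_facts: "nrm2 (perp x) = nrm2 x" "ip x (perp x) = 0"
  unfolding perp_def nrm2_def ip_def sum2 by (simp_all add: algebra_simps)

lemma nz_facts:
  assumes "x \<noteq> (\<lambda>_. 0)"
  shows "nrm2 (nz x) = 1" "\<And>i. x i = complex_of_real (sqrt (nrm2 x)) * nz x i"
proof -
  have npos: "nrm2 x > 0" using nrm2_pos assms by blast
  show "nrm2 (nz x) = 1"
    unfolding nz_def nrm2_def using npos[unfolded nrm2_def]
    by (simp add: norm_divide power_divide sum_divide_distrib[symmetric])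
  show "\<And>i. x i = complex_of_real (sqrt (nrm2 x)) * nz x i"
    unfolding nz_def using npos by simp
qed

lemma ip_nz: "ip (nz u) (nz v) = ip u v / (complex_of_real (sqrt (nrm2 u)) * complex_of_real (sqrt (nrm2 v)))"
  unfolding ip_def nz_def by (simp add: sum_divide_distrib)

lemma orth2:
  fixes u :: "2 \<Rightarrow> 2 \<Rightarrow> complex"
  assumes "ip (u 0) (u 1) = 0"
  shows "\<exists>x \<sigma>. orthonormal_basis x \<and> (\<forall>k. (\<sigma> k::real) \<ge> 0) \<and> (\<forall>k i. u k i = complex_of_real (\<sigma> k) * x k i)"
proof (cases "u 0 = (\<lambda>_. 0)")
  case z0: True
  show ?thesis
  proof (cases "u 1 = (\<lambda>_. 0)")
    case z1: True
    define x :: "2 \<Rightarrow> 2 \<Rightarrow> complex" where "x = (\<lambda>k i. if k = i then 1 else 0)"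
    define \<sigma> :: "2 \<Rightarrow> real" where "\<sigma> = (\<lambda>_. 0)"
    have o: "orthonormal_basis x" apply (rule onb2) unfolding x_def nrm2_def ip_def sum2 by simp_all
    have s: "\<forall>k. \<sigma> k \<ge> 0" unfolding \<sigma>_def by simp
    have r: "\<forall>k i. u k i = complex_of_real (\<sigma> k) * x k i"
      unfolding \<sigma>_def using z0 z1 two_cases by (metis mult_zero_left of_real_0)
    show ?thesis apply (rule exI[where x=x], rule exI[where x=\<sigma>]) using o s r by blast
  next
    case nz1: False
    define y where "y = nz (u 1)"
    define x :: "2 \<Rightarrow> 2 \<Rightarrow> complex" where "x = (\<lambda>k. if k = 0 then perp y else y)"
    define \<sigma> :: "2 \<Rightarrow> real" where "\<sigma> = (\<lambda>k. if k = 0 then 0 else sqrt (nrm2 (u 1)))"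
    have y1: "nrm2 y = 1" using nz_facts[OF nz1] unfolding y_def by simp
    have o: "orthonormal_basis x"
      apply (rule onb2) unfolding x_def using y1 perp_facts[of y] ip_swap[of y "perp y"] by auto
    have s: "\<forall>k. \<sigma> k \<ge> 0" unfolding \<sigma>_def by simp
    have r: "\<forall>k i. u k i = complex_of_real (\<sigma> k) * x k i"
    proof (intro allI)
      fix k i show "u k i = complex_of_real (\<sigma> k) * x k i"
      proof (cases "k = 0")
        case True thus ?thesis using z0 by (simp add: \<sigma>_def x_def)
      next
        case False hence k: "k = 1" using two_cases[of k] by simp
        show ?thesis unfolding k using nz_facts(2)[OF nz1, of i] by (simp add: \<sigma>_def x_def y_def)
      qed
    qed
    show ?thesis apply (rule exI[where x=x], rule exI[where x=\<sigma>]) using o s r by blast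
  qed
next
  case nz0: False
  show ?thesis
  proof (cases "u 1 = (\<lambda>_. 0)")
    case z1: True
    define y where "y = nz (u 0)"
    define x :: "2 \<Rightarrow> 2 \<Rightarrow> complex" where "x = (\<lambda>k. if k = 0 then y else perp y)"
    define \<sigma> :: "2 \<Rightarrow> real" where "\<sigma> = (\<lambda>k. if k = 0 then sqrt (nrm2 (u 0)) else 0)"
    have y1: "nrm2 y = 1" using nz_facts[OF nz0] unfolding y_def by simp
    have o: "orthonormal_basis x"
      apply (rule onb2) unfolding x_def using y1 perp_facts[of y] by auto
    have s: "\<forall>k. \<sigma> k \<ge> 0" unfolding \<sigma>_def by simp
    have r: "\<forall>k i. u k i = complex_of_real (\<sigma> k) * x k i"
    proof (intro allI)
      fix k i show "u k i = complex_of_real (\<sigma> k) * x k i"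
      proof (cases "k = 0")
        case True thus ?thesis using nz_facts(2)[OF nz0, of i] by (simp add: \<sigma>_def x_def y_def)
      next
        case False hence k: "k = 1" using two_cases[of k] by simp
        show ?thesis unfolding k using z1 by (simp add: \<sigma>_def x_def)
      qed
    qed
    show ?thesis apply (rule exI[where x=x], rule exI[where x=\<sigma>]) using o s r by blast
  next
    case nz1: False
    define x :: "2 \<Rightarrow> 2 \<Rightarrow> complex" where "x = (\<lambda>k. nz (u k))"
    define \<sigma> :: "2 \<Rightarrow> real" where "\<sigma> = (\<lambda>k. sqrt (nrm2 (u k)))"
    have o: "orthonormal_basis x"
      apply (rule onb2) unfolding x_def using nz_facts(1)[OF nz0] nz_facts(1)[OF nz1] ip_nz assms by auto
    have s: "\<forall>k. \<sigma> k \<ge> 0" unfolding \<sigma>_def by simp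
    have r: "\<forall>k i. u k i = complex_of_real (\<sigma> k) * x k i"
    proof (intro allI)
      fix k i show "u k i = complex_of_real (\<sigma> k) * x k i"
      proof (cases "k = 0")
        case True thus ?thesis using nz_facts(2)[OF nz0, of i] by (simp add: \<sigma>_def x_def)
      next
        case False hence k: "k = 1" using two_cases[of k] by simp
        show ?thesis unfolding k using nz_facts(2)[OF nz1, of i] by (simp add: \<sigma>_def x_def)
      qed
    qed
    show ?thesis apply (rule exI[where x=x], rule exI[where x=\<sigma>]) using o s r by blast
  qed
qed


lemma svd_exists:
  fixes phi :: "2 \<Rightarrow> 2 \<Rightarrow> complex"
  shows "\<exists>l. schmidt_decomp phi l"
proof -
  define H :: "2 \<Rightarrow> 2 \<Rightarrow> complex" where "H = (\<lambda>j j'. \<Sum>i\<in>UNIV. cnj (phi i j) * phi i j')"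
  have hH: "herm H" unfolding herm_def H_def by (simp add: mult.commute)
  obtain y0 where y0: "nrm2 y0 = 1" "\<forall>j. (\<Sum>j'\<in>UNIV. H j j' * y0 j') = complex_of_real (lmin H) * y0 j"
    using herm_eigvec[OF hH] by blast
  define Y :: "2 \<Rightarrow> 2 \<Rightarrow> complex" where "Y = (\<lambda>k. if k = 0 then y0 else perp y0)"
  have oY: "orthonormal_basis Y"
    apply (rule onb2) unfolding Y_def using y0(1) perp_facts[of y0] by auto
  define u :: "2 \<Rightarrow> 2 \<Rightarrow> complex" where "u = (\<lambda>k i. \<Sum>j\<in>UNIV. phi i j * Y k j)"
  have hc: "cnj (H 0 0) = H 0 0" "cnj (H 1 1) = H 1 1" "cnj (H 0 1) = H 1 0" "cnj (H 1 0) = H 0 1"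
    using hH unfolding herm_def by (metis complex_cnj_cnj)+
  have "ip (u 0) (u 1) = (\<Sum>j\<in>UNIV. cnj (Y 0 j) * (\<Sum>j'\<in>UNIV. H j j' * Y 1 j'))"
    unfolding u_def H_def ip_def sum2 complex_cnj_add complex_cnj_mult by algebra
  also have "\<dots> = cnj (\<Sum>j\<in>UNIV. cnj (Y 1 j) * (\<Sum>j'\<in>UNIV. H j j' * Y 0 j'))"
    unfolding sum2 complex_cnj_add complex_cnj_mult complex_cnj_cnj hc by algebra
  also have "(\<Sum>j\<in>UNIV. cnj (Y 1 j) * (\<Sum>j'\<in>UNIV. H j j' * Y 0 j')) = (\<Sum>j\<in>UNIV. cnj (Y 1 j) * (complex_of_real (lmin H) * Y 0 j))"
    using y0(2) unfolding Y_def by simp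
  also have "\<dots> = complex_of_real (lmin H) * ip (Y 1) (Y 0)"
    unfolding ip_def by (simp add: sum_distrib_left algebra_simps)
  also have "ip (Y 1) (Y 0) = 0"
    using perp_facts(2)[of y0] ip_swap[of "perp y0" y0] unfolding Y_def by simp
  finally have orth: "ip (u 0) (u 1) = 0" by simp
  obtain x \<sigma> where x: "orthonormal_basis x" "\<forall>k. (\<sigma> k::real) \<ge> 0"
      "\<forall>k i. u k i = complex_of_real (\<sigma> k) * x k i"
    using orth2[OF orth] by blast
  define b :: "2 \<Rightarrow> 2 \<Rightarrow> complex" where "b = (\<lambda>k j. cnj (Y k j))"
  define l :: "2 \<Rightarrow> real" where "l = (\<lambda>k. (\<sigma> k)\<^sup>2)"
  have ob: "orthonormal_basis b"
    unfolding orthonormal_basis_def b_def using onb_conj[OF oY] by simp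
  have comp: "(\<Sum>k\<in>UNIV. Y k j' * cnj (Y k j)) = (if j' = j then 1 else 0)" for j' j
  proof -
    have "(\<Sum>k\<in>UNIV. cnj (Y k j) * Y k j') = (if j = j' then 1 else 0)" by (rule onb_complete[OF oY])
    thus ?thesis by (auto simp: mult.commute)
  qed
  have rep: "phi i j = (\<Sum>k\<in>UNIV. complex_of_real (sqrt (l k)) * x k i * b k j)" for i j
  proof -
    have "(\<Sum>k\<in>UNIV. complex_of_real (sqrt (l k)) * x k i * b k j) = (\<Sum>k\<in>UNIV. u k i * cnj (Y k j))"
      unfolding l_def b_def using x(2,3) by simp
    also have "\<dots> = (\<Sum>j'\<in>UNIV. phi i j' * (\<Sum>k\<in>UNIV. Y k j' * cnj (Y k j)))"
      unfolding u_def sum2 by algebra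
    also have "\<dots> = phi i j" unfolding comp by (simp add: if_distrib cong: if_cong)
    finally show ?thesis by simp
  qed
  have "schmidt_decomp phi l"
    unfolding schmidt_decomp_def l_def using x(1) ob rep[unfolded l_def] by auto
  thus ?thesis by blast
qed

definition lamf :: "(2 \<Rightarrow> 2 \<Rightarrow> complex) \<Rightarrow> real" where
  "lamf phi = (sA phi - sqrt ((sA phi)\<^sup>2 - 4 * (cmod (dphi phi))\<^sup>2)) / 2"

lemma lambda_min_eq: "lambda_min phi = lamf phi"
proof -
  obtain l where l: "schmidt_decomp phi l" using svd_exists by blast
  have "x \<in> {min (l 0) (l 1) | l. schmidt_decomp phi l} \<longleftrightarrow> x = lamf phi" for x
  proof
    assume "x \<in> {min (l 0) (l 1) | l. schmidt_decomp phi l}"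
    then obtain l' where "x = min (l' 0) (l' 1)" "schmidt_decomp phi l'" by blast
    thus "x = lamf phi" using schmidt_min unfolding lamf_def by simp
  next
    assume "x = lamf phi"
    hence "x = min (l 0) (l 1)" using schmidt_min[OF l] unfolding lamf_def by simp
    thus "x \<in> {min (l 0) (l 1) | l. schmidt_decomp phi l}" using l by blast
  qed
  hence "{min (l 0) (l 1) | l. schmidt_decomp phi l} = {lamf phi}" by blast
  thus ?thesis unfolding lambda_min_def by simp
qed

definition RA :: "(2 \<Rightarrow> 2 \<Rightarrow> complex) \<Rightarrow> 2 \<Rightarrow> 2 \<Rightarrow> complex" where
  "RA phi i i' = (\<Sum>j\<in>UNIV. phi i j * cnj (phi i' j))"
definition RB :: "(2 \<Rightarrow> 2 \<Rightarrow> complex) \<Rightarrow> 2 \<Rightarrow> 2 \<Rightarrow> complex" where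
  "RB phi j j' = (\<Sum>i\<in>UNIV. phi i j * cnj (phi i j'))"

lemma herm_RA: "herm (RA phi)" unfolding herm_def RA_def by (simp add: mult.commute)
lemma herm_RB: "herm (RB phi)" unfolding herm_def RB_def by (simp add: mult.commute)

lemma sA_eq: "complex_of_real (sA phi) = (\<Sum>i\<in>UNIV. \<Sum>j\<in>UNIV. phi i j * cnj (phi i j))"
  unfolding sA_def by (simp only: of_real_sum complex_norm_square)

lemma trM_RA: "trM (RA phi) = sA phi"
proof -
  have "RA phi 0 0 + RA phi 1 1 = complex_of_real (sA phi)"
    unfolding sA_eq RA_def sum2 by simp
  thus ?thesis unfolding trM_def by simp
qed

lemma trM_RB: "trM (RB phi) = sA phi"
proof -
  have "RB phi 0 0 + RB phi 1 1 = complex_of_real (sA phi)"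
    unfolding sA_eq RB_def sum2 by simp
  thus ?thesis unfolding trM_def by simp
qed

lemma dtM_RA: "dtM (RA phi) = (cmod (dphi phi))\<^sup>2"
proof -
  have "RA phi 0 0 * RA phi 1 1 - RA phi 0 1 * RA phi 1 0 = dphi phi * cnj (dphi phi)"
    unfolding RA_def by (rule det_gram)
  also have "\<dots> = complex_of_real ((cmod (dphi phi))\<^sup>2)" by (simp only: complex_norm_square)
  finally show ?thesis unfolding dtM_def by simp
qed

lemma dtM_RB: "dtM (RB phi) = (cmod (dphi phi))\<^sup>2"
proof -
  define pt where "pt = (\<lambda>j i. phi i j)"
  have "RB phi 0 0 * RB phi 1 1 - RB phi 0 1 * RB phi 1 0 = dphi pt * cnj (dphi pt)"
    unfolding RB_def using det_gram[of pt] unfolding pt_def by simp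
  also have "dphi pt = dphi phi" unfolding pt_def dphi_def by (simp add: mult.commute)
  also have "dphi phi * cnj (dphi phi) = complex_of_real ((cmod (dphi phi))\<^sup>2)" by (simp only: complex_norm_square)
  finally show ?thesis unfolding dtM_def by simp
qed

lemma lmin_RA: "lmin (RA phi) = lambda_min phi"
  unfolding lambda_min_eq lamf_def lmin_def trM_RA dtM_RA ..
lemma lmin_RB: "lmin (RB phi) = lambda_min phi"
  unfolding lambda_min_eq lamf_def lmin_def trM_RB dtM_RB ..


lemma quad_lin:
  fixes N :: "nat \<Rightarrow> 2 \<Rightarrow> 2 \<Rightarrow> complex"
  shows "quad (\<lambda>i j. \<Sum>k<K. complex_of_real (p k) * N k i j) v = (\<Sum>k<K. p k * quad (N k) v)"
proof -
  have "(\<Sum>i\<in>UNIV. \<Sum>j\<in>UNIV. cnj (v i) * (\<Sum>k<K. complex_of_real (p k) * N k i j) * v j)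
      = (\<Sum>k<K. complex_of_real (p k) * (\<Sum>i\<in>UNIV. \<Sum>j\<in>UNIV. cnj (v i) * N k i j * v j))"
    unfolding sum2 by (simp add: sum.distrib sum_distrib_left sum_distrib_right distrib_left mult_ac)
  hence "quad (\<lambda>i j. \<Sum>k<K. complex_of_real (p k) * N k i j) v
       = Re (\<Sum>k<K. complex_of_real (p k) * (\<Sum>i\<in>UNIV. \<Sum>j\<in>UNIV. cnj (v i) * N k i j * v j))"
    unfolding quad_def by simp
  also have "\<dots> = (\<Sum>k<K. p k * quad (N k) v)"
    unfolding quad_def Re_sum by simp
  finally show ?thesis .
qed

lemma rhoA_decomp:
  assumes "pure_decomp psi K p phi"
  shows "rhoA psi = (\<lambda>i i'. \<Sum>k<K. complex_of_real (p k) * RA (phi k) i i')"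
proof (intro ext)
  fix i i'
  have eq: "\<forall>x y. rhoAB psi x y = (\<Sum>k<K. complex_of_real (p k) * phi k (fst x) (snd x) * cnj (phi k (fst y) (snd y)))"
    using assms unfolding pure_decomp_def by blast
  have "rhoA psi i i' = (\<Sum>j\<in>UNIV. rhoAB psi (i, j) (i', j))"
    unfolding rhoA_def rhoAB_def by simp
  also have "\<dots> = (\<Sum>j\<in>UNIV. \<Sum>k<K. complex_of_real (p k) * phi k i j * cnj (phi k i' j))"
    using eq by simp
  also have "\<dots> = (\<Sum>k<K. complex_of_real (p k) * RA (phi k) i i')"
    unfolding RA_def sum2 by (simp add: sum.distrib sum_distrib_left distrib_left mult_ac)
  finally show "rhoA psi i i' = (\<Sum>k<K. complex_of_real (p k) * RA (phi k) i i')" .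
qed

lemma rhoB_decomp:
  assumes "pure_decomp psi K p phi"
  shows "rhoB psi = (\<lambda>j j'. \<Sum>k<K. complex_of_real (p k) * RB (phi k) j j')"
proof (intro ext)
  fix j j'
  have eq: "\<forall>x y. rhoAB psi x y = (\<Sum>k<K. complex_of_real (p k) * phi k (fst x) (snd x) * cnj (phi k (fst y) (snd y)))"
    using assms unfolding pure_decomp_def by blast
  have "rhoB psi j j' = (\<Sum>i\<in>UNIV. rhoAB psi (i, j) (i, j'))"
    unfolding rhoB_def rhoAB_def by simp
  also have "\<dots> = (\<Sum>i\<in>UNIV. \<Sum>k<K. complex_of_real (p k) * phi k i j * cnj (phi k i j'))"
    using eq by simp
  also have "\<dots> = (\<Sum>k<K. complex_of_real (p k) * RB (phi k) j j')"
    unfolding RB_def sum2 by (simp add: sum.distrib sum_distrib_left distrib_left mult_ac)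
  finally show "rhoB psi j j' = (\<Sum>k<K. complex_of_real (p k) * RB (phi k) j j')" .
qed

lemma herm_rhoA: "herm (rhoA psi)" unfolding herm_def rhoA_def by (simp add: mult.commute)
lemma herm_rhoB: "herm (rhoB psi)" unfolding herm_def rhoB_def by (simp add: mult.commute)

lemma concave_bound:
  fixes R :: "nat \<Rightarrow> 2 \<Rightarrow> 2 \<Rightarrow> complex"
  assumes M: "M = (\<lambda>i i'. \<Sum>k<K. complex_of_real (p k) * R k i i')"
    and hR: "\<And>k. herm (R k)" and p0: "\<And>k. k < K \<Longrightarrow> p k \<ge> 0" and hM: "herm M"
  shows "(\<Sum>k<K. p k * lmin (R k)) \<le> lmin M"
proof -
  obtain v where v: "nrm2 v = 1" "\<forall>i. (\<Sum>j\<in>UNIV. M i j * v j) = complex_of_real (lmin M) * v i"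
    using herm_eigvec[OF hM] by blast
  have "(\<Sum>k<K. p k * lmin (R k)) \<le> (\<Sum>k<K. p k * quad (R k) v)"
    by (rule sum_mono) (use p0 rayleigh[OF hR v(1)] in \<open>simp add: mult_left_mono\<close>)
  also have "\<dots> = quad M v" unfolding M quad_lin ..
  also have "\<dots> = lmin M" by (rule quad_eig[OF v])
  finally show ?thesis .
qed

lemma upper:
  assumes "pure_decomp psi K p phi"
  shows "(\<Sum>k<K. p k * E2 (phi k)) \<le> E_A_BS psi" "(\<Sum>k<K. p k * E2 (phi k)) \<le> E_B_AS psi"
proof -
  have p0: "\<And>k. k < K \<Longrightarrow> p k \<ge> 0" using assms unfolding pure_decomp_def by blast
  have "(\<Sum>k<K. p k * lmin (RA (phi k))) \<le> lmin (rhoA psi)"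
    by (rule concave_bound[OF rhoA_decomp[OF assms] herm_RA p0 herm_rhoA])
  hence "(\<Sum>k<K. p k * lambda_min (phi k)) \<le> eig_min (rhoA psi)"
    unfolding lmin_RA eig_min_herm[OF herm_rhoA] .
  thus "(\<Sum>k<K. p k * E2 (phi k)) \<le> E_A_BS psi"
  proof -
    have "(\<Sum>k<K. p k * (2 * lambda_min (phi k))) = 2 * (\<Sum>k<K. p k * lambda_min (phi k))"
      by (simp add: sum_distrib_left mult.left_commute)
    thus ?thesis unfolding E2_def E_A_BS_def using \<open>(\<Sum>k<K. p k * lambda_min (phi k)) \<le> eig_min (rhoA psi)\<close> by simp
  qed
  have "(\<Sum>k<K. p k * lmin (RB (phi k))) \<le> lmin (rhoB psi)"
    by (rule concave_bound[OF rhoB_decomp[OF assms] herm_RB p0 herm_rhoB])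
  hence "(\<Sum>k<K. p k * lambda_min (phi k)) \<le> eig_min (rhoB psi)"
    unfolding lmin_RB eig_min_herm[OF herm_rhoB] .
  thus "(\<Sum>k<K. p k * E2 (phi k)) \<le> E_B_AS psi"
  proof -
    have "(\<Sum>k<K. p k * (2 * lambda_min (phi k))) = 2 * (\<Sum>k<K. p k * lambda_min (phi k))"
      by (simp add: sum_distrib_left mult.left_commute)
    thus ?thesis unfolding E2_def E_B_AS_def using \<open>(\<Sum>k<K. p k * lambda_min (phi k)) \<le> eig_min (rhoB psi)\<close> by simp
  qed
qed


lemma frob_identity:
  fixes V P Q :: "2 \<Rightarrow> 2 \<Rightarrow> complex"
  defines "A \<equiv> (\<lambda>i j. \<Sum>a\<in>UNIV. \<Sum>b\<in>UNIV. cnj (P i a) * cnj (Q j b) * V a b)"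
  shows "(\<Sum>i\<in>UNIV. \<Sum>j\<in>UNIV. A i j * cnj (A i j)) =
    (\<Sum>a\<in>UNIV. \<Sum>b\<in>UNIV. \<Sum>a'\<in>UNIV. \<Sum>b'\<in>UNIV. V a b * cnj (V a' b') *
        (\<Sum>i\<in>UNIV. cnj (P i a) * P i a') * (\<Sum>j\<in>UNIV. cnj (Q j b) * Q j b'))"
  unfolding A_def sum2 complex_cnj_add complex_cnj_mult complex_cnj_cnj by algebra

lemma det_identity:
  fixes V P Q :: "2 \<Rightarrow> 2 \<Rightarrow> complex"
  defines "A \<equiv> (\<lambda>i j. \<Sum>a\<in>UNIV. \<Sum>b\<in>UNIV. cnj (P i a) * cnj (Q j b) * V a b)"
  shows "dphi A = cnj (dphi P) * dphi V * cnj (dphi Q)"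
  unfolding A_def dphi_def sum2 complex_cnj_add complex_cnj_mult complex_cnj_diff by algebra

lemma frob_inv:
  fixes V P Q :: "2 \<Rightarrow> 2 \<Rightarrow> complex"
  assumes "orthonormal_basis P" "orthonormal_basis Q"
  defines "A \<equiv> (\<lambda>i j. \<Sum>a\<in>UNIV. \<Sum>b\<in>UNIV. cnj (P i a) * cnj (Q j b) * V a b)"
  shows "sA A = sA V" "cmod (dphi A) = cmod (dphi V)"
proof -
  have cP: "(\<Sum>i\<in>UNIV. cnj (P i a) * P i a') = (if a = a' then 1 else 0)" for a a'
    by (rule onb_complete[OF assms(1)])
  have cQ: "(\<Sum>j\<in>UNIV. cnj (Q j b) * Q j b') = (if b = b' then 1 else 0)" for b b'
    by (rule onb_complete[OF assms(2)])
  have "complex_of_real (sA A) = complex_of_real (sA V)"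
    unfolding sA_eq A_def frob_identity cP cQ by (simp add: sum2)
  thus "sA A = sA V" by simp
  show "cmod (dphi A) = cmod (dphi V)"
    unfolding A_def det_identity using onb_det[OF assms(1)] onb_det[OF assms(2)] by (simp add: norm_mult)
qed

lemma lamf_diag:
  assumes "sA V = q0 + q1" "(cmod (dphi V))\<^sup>2 = q0 * q1" "q0 \<ge> q1"
  shows "lamf V = q1"
proof -
  have "(sA V)\<^sup>2 - 4 * (cmod (dphi V))\<^sup>2 = (q0 - q1)\<^sup>2"
    unfolding assms(1,2) by (simp add: power2_eq_square algebra_simps)
  hence "sqrt ((sA V)\<^sup>2 - 4 * (cmod (dphi V))\<^sup>2) = q0 - q1" using assms(3) by simp
  thus ?thesis unfolding lamf_def assms(1) by simp
qed

lemma colgram: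
  fixes A :: "2 \<Rightarrow> 2 \<Rightarrow> complex"
  assumes "\<forall>j j'. (\<Sum>i\<in>UNIV. cnj (A i j) * A i j') = (if j = j' then complex_of_real (q j) else 0)"
  shows "sA A = q 0 + q 1" "(cmod (dphi A))\<^sup>2 = q 0 * q 1"
proof -
  have g: "(\<Sum>i\<in>UNIV. cnj (A i j) * A i j') = (if j = j' then complex_of_real (q j) else 0)" for j j'
    using assms by blast
  have "complex_of_real (sA A) = (\<Sum>j\<in>UNIV. \<Sum>i\<in>UNIV. cnj (A i j) * A i j)"
    unfolding sA_eq sum2 by (simp add: mult.commute)
  also have "\<dots> = complex_of_real (q 0 + q 1)" unfolding g sum2 by simp
  finally show "sA A = q 0 + q 1" by (metis of_real_eq_iff)
  define a where "a = (\<lambda>j i. cnj (A i j))"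
  have "complex_of_real (q 0) * complex_of_real (q 1) - 0 * 0 = dphi a * cnj (dphi a)"
  proof -
    have g': "(\<Sum>c\<in>UNIV. a j c * cnj (a j' c)) = (if j = j' then complex_of_real (q j) else 0)" for j j'
      unfolding a_def complex_cnj_cnj using g by simp
    show ?thesis using det_gram[of a] unfolding g' by simp
  qed
  also have "dphi a = cnj (dphi A)" unfolding a_def dphi_def by (simp add: mult.commute)
  also have "cnj (dphi A) * cnj (cnj (dphi A)) = complex_of_real ((cmod (dphi A))\<^sup>2)"
    by (simp only: complex_cnj_cnj complex_norm_square mult.commute)
  finally show "(cmod (dphi A))\<^sup>2 = q 0 * q 1" by (metis of_real_eq_iff of_real_mult diff_zero mult_zero_left)
qed

lemma rowgram:
  fixes A :: "2 \<Rightarrow> 2 \<Rightarrow> complex"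
  assumes "\<forall>i i'. (\<Sum>j\<in>UNIV. A i j * cnj (A i' j)) = (if i = i' then complex_of_real (q i) else 0)"
  shows "sA A = q 0 + q 1" "(cmod (dphi A))\<^sup>2 = q 0 * q 1"
proof -
  have g: "(\<Sum>j\<in>UNIV. A i j * cnj (A i' j)) = (if i = i' then complex_of_real (q i) else 0)" for i i'
    using assms by blast
  have "complex_of_real (sA A) = (\<Sum>i\<in>UNIV. \<Sum>j\<in>UNIV. A i j * cnj (A i j))"
    unfolding sA_eq ..
  also have "\<dots> = complex_of_real (q 0 + q 1)" unfolding g sum2 by simp
  finally show "sA A = q 0 + q 1" by (metis of_real_eq_iff)
  have "complex_of_real (q 0) * complex_of_real (q 1) - 0 * 0 = dphi A * cnj (dphi A)"
    using det_gram[of A] unfolding g by simp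
  also have "\<dots> = complex_of_real ((cmod (dphi A))\<^sup>2)"
    by (simp only: complex_norm_square)
  finally show "(cmod (dphi A))\<^sup>2 = q 0 * q 1" by (metis of_real_eq_iff of_real_mult diff_zero mult_zero_left)
qed

lemma sA_nonneg: "sA V \<ge> 0" unfolding sA_def by (simp add: sum_nonneg)

lemma sA_zero: "sA V = 0 \<Longrightarrow> V a b = 0"
proof -
  assume z: "sA V = 0"
  have "(cmod (V a b))\<^sup>2 \<le> (\<Sum>j\<in>UNIV. (cmod (V a j))\<^sup>2)" by (rule member_le_sum) auto
  also have "\<dots> \<le> sA V" unfolding sA_def by (rule member_le_sum[of a]) (auto intro: sum_nonneg)
  finally show "V a b = 0" using z by simp
qed

lemma lamf_zero: "sA V = 0 \<Longrightarrow> lamf V = 0"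
proof -
  assume z: "sA V = 0"
  hence "dphi V = 0" unfolding dphi_def using sA_zero[OF z] by simp
  thus ?thesis unfolding lamf_def z by simp
qed

lemma lamf_scale:
  assumes "s > 0"
  shows "lamf (\<lambda>a b. V a b / complex_of_real (sqrt s)) = lamf V / s"
proof -
  have sa: "sA (\<lambda>a b. V a b / complex_of_real (sqrt s)) = sA V / s"
    unfolding sA_def using assms by (simp add: norm_divide power_divide sum_divide_distrib)
  have dd: "cmod (dphi (\<lambda>a b. V a b / complex_of_real (sqrt s))) = cmod (dphi V) / s"
  proof -
    have "dphi (\<lambda>a b. V a b / complex_of_real (sqrt s)) = dphi V / complex_of_real s"
    proof -
      have sq: "(complex_of_real (sqrt s))\<^sup>2 = complex_of_real s"
        using assms by (simp flip: of_real_power)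
      show ?thesis unfolding dphi_def using assms sq by (simp add: field_simps power2_eq_square[symmetric])
    qed
    thus ?thesis using assms by (simp add: norm_divide)
  qed
  have "(sA V / s)\<^sup>2 - 4 * (cmod (dphi V) / s)\<^sup>2 = ((sA V)\<^sup>2 - 4 * (cmod (dphi V))\<^sup>2) / s\<^sup>2"
    using assms by (simp add: field_simps power2_eq_square)
  hence sq: "sqrt ((sA V / s)\<^sup>2 - 4 * (cmod (dphi V) / s)\<^sup>2) = sqrt ((sA V)\<^sup>2 - 4 * (cmod (dphi V))\<^sup>2) / s"
    using assms by (simp add: real_sqrt_divide)
  have "lamf (\<lambda>a b. V a b / complex_of_real (sqrt s)) = (sA V / s - sqrt ((sA V / s)\<^sup>2 - 4 * (cmod (dphi V) / s)\<^sup>2)) / 2"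
    unfolding lamf_def sa dd ..
  also have "\<dots> = (sA V / s - sqrt ((sA V)\<^sup>2 - 4 * (cmod (dphi V))\<^sup>2) / s) / 2" unfolding sq ..
  also have "\<dots> = lamf V / s" unfolding lamf_def by (simp add: diff_divide_distrib)
  finally show ?thesis .
qed


lemma if01_mult: "(if a = b then 1 else 0) * (x::complex) = (if a = b then x else 0)" by simp

lemma onb_parseval:
  fixes e :: "'m::finite \<Rightarrow> 'm \<Rightarrow> complex"
  assumes "orthonormal_basis e"
  shows "(\<Sum>l\<in>UNIV. (\<Sum>c\<in>UNIV. cnj (e l c) * P c) * cnj (\<Sum>c\<in>UNIV. cnj (e l c) * Q c))
        = (\<Sum>c\<in>UNIV. P c * cnj (Q c))"
proof -
  have "(\<Sum>l\<in>UNIV. (\<Sum>c\<in>UNIV. cnj (e l c) * P c) * cnj (\<Sum>c\<in>UNIV. cnj (e l c) * Q c))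
     = (\<Sum>l\<in>UNIV. \<Sum>c\<in>UNIV. \<Sum>c'\<in>UNIV. (cnj (e l c) * e l c') * (P c * cnj (Q c')))"
    by (simp add: sum_product cnj_sum mult_ac)
  also have "\<dots> = (\<Sum>c\<in>UNIV. \<Sum>c'\<in>UNIV. \<Sum>l\<in>UNIV. (cnj (e l c) * e l c') * (P c * cnj (Q c')))"
    apply (rule trans[OF sum.swap]) apply (rule sum.cong[OF refl]) apply (rule sum.swap) done
  also have "\<dots> = (\<Sum>c\<in>UNIV. \<Sum>c'\<in>UNIV. (\<Sum>l\<in>UNIV. cnj (e l c) * e l c') * (P c * cnj (Q c')))"
    by (simp add: sum_distrib_right)
  also have "\<dots> = (\<Sum>c\<in>UNIV. P c * cnj (Q c))"
    unfolding onb_complete[OF assms] if01_mult by simp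
  finally show ?thesis .
qed

definition vS :: "(2 \<Rightarrow> 2 \<Rightarrow> 'n::finite \<Rightarrow> complex) \<Rightarrow> ('n \<Rightarrow> 'n \<Rightarrow> complex) \<Rightarrow> 'n \<Rightarrow> 2 \<Rightarrow> 2 \<Rightarrow> complex" where
  "vS psi eS l a b = (\<Sum>c\<in>UNIV. cnj (eS l c) * psi a b c)"

lemma vS_rho:
  assumes "orthonormal_basis eS"
  shows "(\<Sum>l\<in>UNIV. vS psi eS l a b * cnj (vS psi eS l a' b')) = rhoAB psi (a, b) (a', b')"
  unfolding vS_def rhoAB_def using onb_parseval[OF assms] by simp

lemma Amat_vS:
  "Amat psi eA eB eS l i j = (\<Sum>a\<in>UNIV. \<Sum>b\<in>UNIV. cnj (eA i a) * cnj (eB j b) * vS psi eS l a b)"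
  unfolding Amat_def vS_def by (simp add: sum_distrib_left mult.assoc)

lemma lamf_col:
  assumes "orthonormal_basis eA" "orthonormal_basis eB"
    "\<forall>j j'. (\<Sum>i\<in>UNIV. cnj (Amat psi eA eB eS l i j) * Amat psi eA eB eS l i j') = (if j = j' then complex_of_real (q j) else 0)"
    "q 0 \<ge> q 1"
  shows "lamf (vS psi eS l) = q 1"
proof -
  let ?A = "Amat psi eA eB eS l"
  have Aeq: "?A = (\<lambda>i j. \<Sum>a\<in>UNIV. \<Sum>b\<in>UNIV. cnj (eA i a) * cnj (eB j b) * vS psi eS l a b)"
    using Amat_vS by blast
  have c: "sA ?A = q 0 + q 1" "(cmod (dphi ?A))\<^sup>2 = q 0 * q 1" using colgram[OF assms(3)] by auto
  show ?thesis
    apply (rule lamf_diag[OF _ _ assms(4)])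
    using c frob_inv[OF assms(1,2), of "vS psi eS l"] unfolding Aeq[symmetric] by auto
qed

lemma lamf_row:
  assumes "orthonormal_basis eA" "orthonormal_basis eB"
    "\<forall>i i'. (\<Sum>j\<in>UNIV. Amat psi eA eB eS l i j * cnj (Amat psi eA eB eS l i' j)) = (if i = i' then complex_of_real (q i) else 0)"
    "q 0 \<ge> q 1"
  shows "lamf (vS psi eS l) = q 1"
proof -
  let ?A = "Amat psi eA eB eS l"
  have Aeq: "?A = (\<lambda>i j. \<Sum>a\<in>UNIV. \<Sum>b\<in>UNIV. cnj (eA i a) * cnj (eB j b) * vS psi eS l a b)"
    using Amat_vS by blast
  have c: "sA ?A = q 0 + q 1" "(cmod (dphi ?A))\<^sup>2 = q 0 * q 1" using rowgram[OF assms(3)] by auto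
  show ?thesis
    apply (rule lamf_diag[OF _ _ assms(4)])
    using c frob_inv[OF assms(1,2), of "vS psi eS l"] unfolding Aeq[symmetric] by auto
qed


lemma sA_scale:
  assumes "s > 0"
  shows "sA (\<lambda>a b. V a b / complex_of_real (sqrt s)) = sA V / s"
  unfolding sA_def using assms by (simp add: norm_divide power_divide sum_divide_distrib)

lemma achieve:
  fixes psi :: "2 \<Rightarrow> 2 \<Rightarrow> 'n::finite \<Rightarrow> complex"
  assumes n3: "normalized3 psi" and oS: "orthonormal_basis eS"
    and f: "\<forall>l. lamf (vS psi eS l) = f l"
  shows "2 * (\<Sum>l\<in>UNIV. f l) \<in> decomp_values psi"
proof -
  define K where "K = CARD('n)"
  obtain g where g: "bij_betw g {..<K} (UNIV::'n set)"
    using ex_bij_betw_nat_finite[of "UNIV::'n set"] by (auto simp: K_def lessThan_atLeast0)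
  define V where "V = vS psi eS"
  define pk where "pk = (\<lambda>k. sA (V (g k)))"
  define ph where "ph = (\<lambda>k. if pk k > 0 then (\<lambda>a b. V (g k) a b / complex_of_real (sqrt (pk k)))
                              else (\<lambda>a b. if a = 0 \<and> b = 0 then 1 else 0))"
  have reidx: "\<And>G. (\<Sum>k<K. G (g k)) = (\<Sum>l\<in>UNIV. G l)" by (rule sum.reindex_bij_betw[OF g])
  have pk0: "pk k \<ge> 0" for k unfolding pk_def by (rule sA_nonneg)
  have n2: "normalized2 (ph k)" for k
  proof -
    have "sA (ph k) = 1"
    proof (cases "pk k > 0")
      case True thus ?thesis unfolding ph_def using sA_scale[OF True, of "V (g k)"] by (simp add: pk_def)
    next
      case False thus ?thesis unfolding ph_def by (simp add: sA_def sum2)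
    qed
    thus ?thesis unfolding normalized2_def sA_def .
  qed
  have trm: "complex_of_real (pk k) * ph k x1 x2 * cnj (ph k y1 y2) = V (g k) x1 x2 * cnj (V (g k) y1 y2)" for k x1 x2 y1 y2
  proof (cases "pk k > 0")
    case True
    have sq: "complex_of_real (sqrt (pk k)) * complex_of_real (sqrt (pk k)) = complex_of_real (pk k)"
      using True by (simp flip: of_real_mult)
    have nz: "complex_of_real (sqrt (pk k)) \<noteq> 0" using True by simp
    show ?thesis unfolding ph_def using True nz sq by (simp add: field_simps)
  next
    case False
    hence "pk k = 0" using pk0[of k] by simp
    hence "V (g k) x1 x2 = 0" using sA_zero unfolding pk_def by blast
    thus ?thesis using \<open>pk k = 0\<close> by simp
  qed
  have val: "pk k * E2 (ph k) = 2 * lamf (V (g k))" for k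
  proof (cases "pk k > 0")
    case True
    have "lamf (ph k) = lamf (V (g k)) / pk k" unfolding ph_def using True lamf_scale[OF True] by simp
    thus ?thesis unfolding E2_def lambda_min_eq using True by simp
  next
    case False
    hence "pk k = 0" using pk0[of k] by simp
    hence "lamf (V (g k)) = 0" using lamf_zero unfolding pk_def by blast
    thus ?thesis using \<open>pk k = 0\<close> by simp
  qed
  have rhoV: "(\<Sum>l\<in>UNIV. V l a b * cnj (V l a' b')) = rhoAB psi (a, b) (a', b')" for a b a' b'
    unfolding V_def by (rule vS_rho[OF oS])
  have sum1: "(\<Sum>k<K. pk k) = 1"
  proof -
    have "complex_of_real (\<Sum>k<K. pk k) = (\<Sum>l\<in>UNIV. complex_of_real (sA (V l)))"
      unfolding pk_def of_real_sum by (rule reidx)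
    also have "\<dots> = (\<Sum>l\<in>UNIV. \<Sum>a\<in>UNIV. \<Sum>b\<in>UNIV. V l a b * cnj (V l a b))"
      unfolding sA_eq ..
    also have "\<dots> = (\<Sum>a\<in>UNIV. \<Sum>b\<in>UNIV. \<Sum>l\<in>UNIV. V l a b * cnj (V l a b))"
      unfolding sum2 by (simp add: sum.distrib)
    also have "\<dots> = (\<Sum>a\<in>UNIV. \<Sum>b\<in>UNIV. rhoAB psi (a, b) (a, b))"
      unfolding rhoV ..
    also have "\<dots> = complex_of_real (\<Sum>a\<in>UNIV. \<Sum>b\<in>UNIV. \<Sum>c\<in>UNIV. (cmod (psi a b c))\<^sup>2)"
      unfolding rhoAB_def of_real_sum by (simp only: fst_conv snd_conv complex_norm_square)
    also have "\<dots> = 1" using n3 unfolding normalized3_def by simp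
    finally show ?thesis by (metis of_real_eq_1_iff)
  qed
  have rho: "\<forall>x y. rhoAB psi x y =
        (\<Sum>k<K. complex_of_real (pk k) * ph k (fst x) (snd x) * cnj (ph k (fst y) (snd y)))"
  proof (intro allI)
    fix x y :: "2 \<times> 2"
    have "(\<Sum>k<K. complex_of_real (pk k) * ph k (fst x) (snd x) * cnj (ph k (fst y) (snd y)))
        = (\<Sum>k<K. V (g k) (fst x) (snd x) * cnj (V (g k) (fst y) (snd y)))"
      unfolding trm ..
    also have "\<dots> = (\<Sum>l\<in>UNIV. V l (fst x) (snd x) * cnj (V l (fst y) (snd y)))"
      by (rule reidx)
    also have "\<dots> = rhoAB psi x y" unfolding rhoV by simp
    finally show "rhoAB psi x y =
        (\<Sum>k<K. complex_of_real (pk k) * ph k (fst x) (snd x) * cnj (ph k (fst y) (snd y)))" by simp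
  qed
  have pd: "pure_decomp psi K pk ph"
    unfolding pure_decomp_def using pk0 n2 sum1 rho by blast
  have "(\<Sum>k<K. pk k * E2 (ph k)) = (\<Sum>k<K. 2 * lamf (V (g k)))" unfolding val ..
  also have "\<dots> = (\<Sum>l\<in>UNIV. 2 * lamf (V l))" by (rule reidx)
  also have "\<dots> = 2 * (\<Sum>l\<in>UNIV. f l)" using f unfolding V_def by (simp add: sum_distrib_left)
  finally have v: "(\<Sum>k<K. pk k * E2 (ph k)) = 2 * (\<Sum>l\<in>UNIV. f l)" .
  show ?thesis unfolding decomp_values_def mem_Collect_eq
    apply (rule exI[where x=K], rule exI[where x=pk], rule exI[where x=ph])
    using v pd by simp
qed

theorem theorem6:
  fixes psi :: "2 \<Rightarrow> 2 \<Rightarrow> 'n::finite \<Rightarrow> complex"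
  assumes "CARD('n) \<ge> 2"
    and "normalized3 psi"
    and "class_A psi"
  shows "min (E_A_BS psi) (E_B_AS psi) \<in> decomp_values psi \<and>
         (\<forall>v\<in>decomp_values psi. v \<le> min (E_A_BS psi) (E_B_AS psi))"
proof
  show "\<forall>v\<in>decomp_values psi. v \<le> min (E_A_BS psi) (E_B_AS psi)"
  proof
    fix v assume "v \<in> decomp_values psi"
    then obtain K p phi where vv: "v = (\<Sum>k<K. p k * E2 (phi k))" and pd: "pure_decomp psi K p phi"
      unfolding decomp_values_def by blast
    show "v \<le> min (E_A_BS psi) (E_B_AS psi)" using upper[OF pd] unfolding vv by simp
  qed
  show "min (E_A_BS psi) (E_B_AS psi) \<in> decomp_values psi"
    using assms(3) unfolding class_A_def
  proof (elim disjE conjE exE)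
    fix eA eB eS and q :: "2 \<Rightarrow> 'n \<Rightarrow> real"
    assume ge: "E_B_AS psi \<le> E_A_BS psi" and oA: "orthonormal_basis eA" and oB: "orthonormal_basis eB"
      and oS: "orthonormal_basis eS"
      and g: "\<forall>l j j'. (\<Sum>i\<in>UNIV. cnj (Amat psi eA eB eS l i j) * Amat psi eA eB eS l i j') =
                 (if j = j' then complex_of_real (q j l) else 0)"
      and o: "\<forall>l. q 1 l \<le> q 0 l" and s0: "(\<Sum>l\<in>UNIV. q 0 l) = eig_max (rhoB psi)"
      and s1: "(\<Sum>l\<in>UNIV. q 1 l) = eig_min (rhoB psi)"
    have f: "\<forall>l. lamf (vS psi eS l) = q 1 l"
    proof
      fix l
      show "lamf (vS psi eS l) = q 1 l"
        by (rule lamf_col[OF oA oB, of psi eS l "\<lambda>j. q j l"]) (use g o in auto)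
    qed
    have "2 * (\<Sum>l\<in>UNIV. q 1 l) \<in> decomp_values psi" by (rule achieve[OF assms(2) oS f])
    moreover have "min (E_A_BS psi) (E_B_AS psi) = 2 * (\<Sum>l\<in>UNIV. q 1 l)"
      using ge unfolding s1 E_B_AS_def by simp
    ultimately show ?thesis by simp
  next
    fix eA eB eS and p :: "2 \<Rightarrow> 'n \<Rightarrow> real"
    assume ge: "E_A_BS psi \<le> E_B_AS psi" and oA: "orthonormal_basis eA" and oB: "orthonormal_basis eB"
      and oS: "orthonormal_basis eS"
      and g: "\<forall>l i i'. (\<Sum>j\<in>UNIV. Amat psi eA eB eS l i j * cnj (Amat psi eA eB eS l i' j)) =
                 (if i = i' then complex_of_real (p i l) else 0)"
      and o: "\<forall>l. p 1 l \<le> p 0 l" and s0: "(\<Sum>l\<in>UNIV. p 0 l) = eig_max (rhoA psi)"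
      and s1: "(\<Sum>l\<in>UNIV. p 1 l) = eig_min (rhoA psi)"
    have f: "\<forall>l. lamf (vS psi eS l) = p 1 l"
    proof
      fix l
      show "lamf (vS psi eS l) = p 1 l"
        by (rule lamf_row[OF oA oB, of psi eS l "\<lambda>i. p i l"]) (use g o in auto)
    qed
    have "2 * (\<Sum>l\<in>UNIV. p 1 l) \<in> decomp_values psi" by (rule achieve[OF assms(2) oS f])
    moreover have "min (E_A_BS psi) (E_B_AS psi) = 2 * (\<Sum>l\<in>UNIV. p 1 l)"
      using ge unfolding s1 E_A_BS_def by simp
    ultimately show ?thesis by simp
  qed
qed

end
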